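(* Let $\mathcal{X}$ be finite, $\mathcal{C}\subseteq\{\pm1\}^{\mathcal{X}}$ a concept class, and $\alpha\in(0,1)$. Suppose $\{\lambda_c\}_{c\in\mathcal{C}}$ and $\{\mu_c\}_{c\in\mathcal{C}}$ are families of distributions on $\mathcal{Z}=\mathcal{X}\times\{\pm1\}$ and $\pi$ is a distribution on $\mathcal{C}$ such that $$\Delta:=\mathbb{E}_{c\sim\pi}[L_{\lambda_c}(c)]>\frac{2\alpha}{1+\alpha},$$ and $L_{\mu_c}(c)=0$ for all $c\in\mathcal{C}$. Let $U\in\mathbb{R}^{\mathcal{C}\times\mathcal{Z}}$ have entries $u_{c,z}=\pi(c)(\lambda_c(z)-\mu_c(z))$. Then there exist families $\{\widetilde\lambda_c\}_{c\in\mathcal{C}}$, $\{\widetilde\mu_c\}_{c\in\mathcal{C}}$ of distributions on $\mathcal{Z}$ and a distribution $\widetilde\pi$ on $\mathcal{C}$ such that: 1. for all $c$ in the support of $\widetilde\pi$, $L_{\widetilde\lambda_c}(c)\ge \frac{C_0\,\alpha/(1+\alpha)}{\log((1+\alpha)/\alpha)}$, where $C_0>0$ is an absolute constant; 2. $L_{\widetilde\mu_c}(c)=0$ for all $c\in\mathcal{C}$; 3. the matrix $\widetilde U\in\mathbb{R}^{\mathcal{C}\times\mathcal{Z}}$ with entries $\widetilde u_{c,z}=\widetilde\pi(c)(\widetilde\lambda_c(z)-\widetilde\mu_c(z))$ satisfies $\gamma_2^*(\widetilde U)\le\frac{2\alpha\,\gamma_2^*(U)}{(1+\alpha)\Delt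a}$.
   Context: $L_{\mathcal{D}}(h)=\Pr_{(x,y)\sim\mathcal{D}}[h(x)\ne y]$. $\gamma_2(M)=\min\{\|R\|_{2\to\infty}\|A\|_{1\to2}:RA=M\}$ (max Euclidean row norm times max Euclidean column norm); $\gamma_2^*(N)=\max\{\sum_{i,j}m_{ij}n_{ij}:\gamma_2(M)\le1\}$ is its dual norm. *)

theory Defs
  imports Complex_Main
begin

definition is_distr :: "'a set \<Rightarrow> ('a \<Rightarrow> real) \<Rightarrow> bool" where
  "is_distr S p \<longleftrightarrow> (\<forall>z. 0 \<le> p z) \<and> (\<forall>z. z \<notin> S \<longrightarrow> p z = 0) \<and> sum p S = 1"

text \<open>Labels \<open>{\<plusminus>1}\<close> are encoded as bool (True = +1, False = -1).
  The sample space Z = X \<times> {\<plusminus>1}.\<close>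
definition sample_space :: "nat set \<Rightarrow> (nat \<times> bool) set" where
  "sample_space X = X \<times> (UNIV :: bool set)"

definition concepts :: "nat set \<Rightarrow> (nat \<Rightarrow> bool) set" where
  "concepts X = {c. \<forall>x. x \<notin> X \<longrightarrow> c x = False}"

definition loss :: "nat set \<Rightarrow> (nat \<times> bool \<Rightarrow> real) \<Rightarrow> (nat \<Rightarrow> bool) \<Rightarrow> real" where
  "loss X D h = (\<Sum>z\<in>sample_space X. if h (fst z) \<noteq> snd z then D z else 0)"

definition gamma2 :: "'r set \<Rightarrow> 'c set \<Rightarrow> ('r \<Rightarrow> 'c \<Rightarrow> real) \<Rightarrow> real" where
  "gamma2 Rw Cl M = Inf {Max (insert 0 ((\<lambda>i. sqrt (\<Sum>l<k. (R i l)^2)) ` Rw)) *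
                          Max (insert 0 ((\<lambda>j. sqrt (\<Sum>l<k. (A l j)^2)) ` Cl)) | (k::nat) R A.
                          \<forall>i\<in>Rw. \<forall>j\<in>Cl. M i j = (\<Sum>l<k. R i l * A l j)}"

definition gamma2_dual :: "'r set \<Rightarrow> 'c set \<Rightarrow> ('r \<Rightarrow> 'c \<Rightarrow> real) \<Rightarrow> real" where
  "gamma2_dual Rw Cl N = Sup {(\<Sum>i\<in>Rw. \<Sum>j\<in>Cl. M i j * N i j) | M. gamma2 Rw Cl (M :: 'r \<Rightarrow> 'c \<Rightarrow> real) \<le> 1}"

end

theory Submission
  imports Defs "HOL-Analysis.Convex"
begin


definition g2set :: "'r set \<Rightarrow> 'c set \<Rightarrow> ('r \<Rightarrow> 'c \<Rightarrow> real) \<Rightarrow> real set" where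
  "g2set Rw Cl M = {Max (insert 0 ((\<lambda>i. sqrt (\<Sum>l<k. (R i l)^2)) ` Rw)) *
                          Max (insert 0 ((\<lambda>j. sqrt (\<Sum>l<k. (A l j)^2)) ` Cl)) | (k::nat) R A.
                          \<forall>i\<in>Rw. \<forall>j\<in>Cl. M i j = (\<Sum>l<k. R i l * A l j)}"

lemma gamma2_eq: "gamma2 Rw Cl M = Inf (g2set Rw Cl M)"
  unfolding gamma2_def g2set_def by simp

lemma max_ins_ge0: "finite S \<Longrightarrow> 0 \<le> Max (insert (0::real) (f ` S))"
  by (simp add: Max_ge_iff)

lemma max_ins_ge: "finite S \<Longrightarrow> x \<in> S \<Longrightarrow> f x \<le> Max (insert (0::real) (f ` S))"
  by (simp add: Max_ge_iff)

lemma g2set_nonneg: "finite Rw \<Longrightarrow> finite Cl \<Longrightarrow> x \<in> g2set Rw Cl M \<Longrightarrow> 0 \<le> x"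
  unfolding g2set_def using max_ins_ge0 by (auto intro!: mult_nonneg_nonneg)

lemma g2set_bdd: "finite Rw \<Longrightarrow> finite Cl \<Longrightarrow> bdd_below (g2set Rw Cl M)"
  using g2set_nonneg by (meson bdd_belowI)

lemma g2set_nonempty:
  assumes "finite Cl" shows "g2set Rw Cl M \<noteq> {}"
proof -
  obtain f where f: "bij_betw f {0..<card Cl} Cl" using ex_bij_betw_nat_finite[OF assms] by blast
  define R where "R i l = M i (f l)" for i l
  define A where "A l j = (if f l = j then 1 else (0::real))" for l j
  have "\<forall>i\<in>Rw. \<forall>j\<in>Cl. M i j = (\<Sum>l<card Cl. R i l * A l j)"
  proof (intro ballI)
    fix i j assume "j \<in> Cl"
    have "(\<Sum>l<card Cl. R i l * A l j) = (\<Sum>l\<in>{0..<card Cl}. (\<lambda>j'. M i j' * (if j' = j then 1 else 0)) (f l))"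
      unfolding R_def A_def by (simp add: lessThan_atLeast0)
    also have "\<dots> = (\<Sum>j'\<in>Cl. M i j' * (if j' = j then 1 else 0))"
      by (rule sum.reindex_bij_betw[OF f])
    also have "\<dots> = M i j" using \<open>j \<in> Cl\<close> assms by (simp add: if_distrib cong: if_cong)
    finally show "M i j = (\<Sum>l<card Cl. R i l * A l j)" by simp
  qed
  then show ?thesis unfolding g2set_def by blast
qed

lemma gamma2_entry:
  assumes fin: "finite Rw" "finite Cl" and g: "gamma2 Rw Cl M \<le> 1" and ij: "i \<in> Rw" "j \<in> Cl"
  shows "\<bar>M i j\<bar> \<le> 1"
proof (rule ccontr)
  assume "\<not> ?thesis"
  hence "Inf (g2set Rw Cl M) < \<bar>M i j\<bar>" using g unfolding gamma2_eq by linarith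
  then obtain x where "x \<in> g2set Rw Cl M" "x < \<bar>M i j\<bar>"
    using cInf_less_iff[OF g2set_nonempty[OF fin(2)] g2set_bdd[OF fin]] by blast
  then obtain k :: nat and R A where x: "x = Max (insert 0 ((\<lambda>i. sqrt (\<Sum>l<k. (R i l)^2)) ` Rw)) *
                          Max (insert 0 ((\<lambda>j. sqrt (\<Sum>l<k. (A l j)^2)) ` Cl))"
     and fac: "\<forall>i\<in>Rw. \<forall>j\<in>Cl. M i j = (\<Sum>l<k. R i l * A l j)" and lt: "x < \<bar>M i j\<bar>"
    unfolding g2set_def by blast
  have "\<bar>M i j\<bar>^2 \<le> (\<Sum>l<k. (R i l)^2) * (\<Sum>l<k. (A l j)^2)"
    using fac ij Cauchy_Schwarz_ineq_sum[of "\<lambda>l. R i l" "\<lambda>l. A l j" "{..<k}"] by simp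
  hence "sqrt (\<bar>M i j\<bar>^2) \<le> sqrt ((\<Sum>l<k. (R i l)^2) * (\<Sum>l<k. (A l j)^2))"
    using real_sqrt_le_mono by blast
  hence "\<bar>M i j\<bar> \<le> sqrt (\<Sum>l<k. (R i l)^2) * sqrt (\<Sum>l<k. (A l j)^2)"
    by (simp add: real_sqrt_mult)
  also have "\<dots> \<le> x" unfolding x
  proof (rule mult_mono)
    show "sqrt (\<Sum>l<k. (R i l)^2) \<le> Max (insert 0 ((\<lambda>i. sqrt (\<Sum>l<k. (R i l)^2)) ` Rw))"
      by (rule max_ins_ge[OF fin(1) ij(1)])
    show "sqrt (\<Sum>l<k. (A l j)^2) \<le> Max (insert 0 ((\<lambda>j. sqrt (\<Sum>l<k. (A l j)^2)) ` Cl))"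
      by (rule max_ins_ge[OF fin(2) ij(2)])
    show "0 \<le> Max (insert 0 ((\<lambda>i. sqrt (\<Sum>l<k. (R i l)^2)) ` Rw))"
      by (rule max_ins_ge0[OF fin(1)])
    have "0 \<le> (\<Sum>l<k. (A l j)^2)" by (rule sum_nonneg) simp
    thus "0 \<le> sqrt (\<Sum>l<k. (A l j)^2)" by simp
  qed
  finally show False using lt by simp
qed

lemma gamma2_restrict:
  assumes fin: "finite Rw" "finite Cl"
  shows "gamma2 Rw Cl (\<lambda>i j. if d i then M i j else 0) \<le> gamma2 Rw Cl M"
  unfolding gamma2_eq
proof (rule cInf_mono[OF g2set_nonempty[OF fin(2)] g2set_bdd[OF fin]])
  fix b assume "b \<in> g2set Rw Cl M"
  then obtain k :: nat and R A where b: "b = Max (insert 0 ((\<lambda>i. sqrt (\<Sum>l<k. (R i l)^2)) ` Rw)) *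
                          Max (insert 0 ((\<lambda>j. sqrt (\<Sum>l<k. (A l j)^2)) ` Cl))"
     and fac: "\<forall>i\<in>Rw. \<forall>j\<in>Cl. M i j = (\<Sum>l<k. R i l * A l j)"
    unfolding g2set_def by blast
  define R' where "R' i l = (if d i then R i l else 0)" for i l
  have fac': "\<forall>i\<in>Rw. \<forall>j\<in>Cl. (if d i then M i j else 0) = (\<Sum>l<k. R' i l * A l j)"
    using fac unfolding R'_def by auto
  let ?a = "Max (insert 0 ((\<lambda>i. sqrt (\<Sum>l<k. (R' i l)^2)) ` Rw)) *
                          Max (insert 0 ((\<lambda>j. sqrt (\<Sum>l<k. (A l j)^2)) ` Cl))"
  have "?a \<in> g2set Rw Cl (\<lambda>i j. if d i then M i j else 0)"
    using fac' unfolding g2set_def by blast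
  moreover have "?a \<le> b" unfolding b
  proof (rule mult_right_mono)
    show "0 \<le> Max (insert 0 ((\<lambda>j. sqrt (\<Sum>l<k. (A l j)^2)) ` Cl))" using max_ins_ge0 fin by blast
    show "Max (insert 0 ((\<lambda>i. sqrt (\<Sum>l<k. (R' i l)^2)) ` Rw)) \<le> Max (insert 0 ((\<lambda>i. sqrt (\<Sum>l<k. (R i l)^2)) ` Rw))"
    proof (subst Max_le_iff, simp_all add: fin, intro ballI)
      fix i assume "i \<in> Rw"
      show "sqrt (\<Sum>l<k. (R' i l)^2) \<le> Max (insert 0 ((\<lambda>i. sqrt (\<Sum>l<k. (R i l)^2)) ` Rw))"
      proof (cases "d i")
        case True then show ?thesis using max_ins_ge[OF fin(1) \<open>i\<in>Rw\<close>] by (simp add: R'_def)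
      next
        case False then show ?thesis using max_ins_ge0[OF fin(1)] by (simp add: R'_def)
      qed
    qed
  qed
  ultimately show "\<exists>a\<in>g2set Rw Cl (\<lambda>i j. if d i then M i j else 0). a \<le> b" by blast
qed

lemma gamma2_zero:
  assumes fin: "finite Rw" "finite Cl"
  shows "gamma2 Rw Cl (\<lambda>i j. 0) \<le> 1"
proof -
  have e: "insert (0::real) ((\<lambda>x. 0) ` Rw) = {0}" "insert (0::real) ((\<lambda>x. 0) ` Cl) = {0}" by auto
  have "(0::real) \<in> g2set Rw Cl (\<lambda>i j. 0)"
    unfolding g2set_def mem_Collect_eq
    apply (rule exI[of _ "0::nat"], rule exI[of _ "\<lambda>i l. 0::real"], rule exI[of _ "\<lambda>l j. 0::real"])
    apply (simp only: lessThan_0 sum.empty real_sqrt_zero e Max_singleton mult_zero_left)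
    by blast
  hence "Inf (g2set Rw Cl (\<lambda>i j. 0)) \<le> 0" by (rule cInf_lower[OF _ g2set_bdd[OF fin]])
  thus ?thesis by (simp only: gamma2_eq)
qed

lemma dual_bdd:
  assumes fin: "finite Rw" "finite Cl"
  shows "bdd_above {(\<Sum>i\<in>Rw. \<Sum>j\<in>Cl. M i j * N i j) | M. gamma2 Rw Cl (M :: 'r \<Rightarrow> 'c \<Rightarrow> real) \<le> 1}"
proof (rule bdd_aboveI, clarify)
  fix M :: "'r \<Rightarrow> 'c \<Rightarrow> real" assume g: "gamma2 Rw Cl M \<le> 1"
  show "(\<Sum>i\<in>Rw. \<Sum>j\<in>Cl. M i j * N i j) \<le> (\<Sum>i\<in>Rw. \<Sum>j\<in>Cl. \<bar>N i j\<bar>)"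
  proof (intro sum_mono)
    fix i j assume "i \<in> Rw" "j \<in> Cl"
    hence "\<bar>M i j\<bar> \<le> 1" using gamma2_entry[OF fin g] by blast
    hence "\<bar>M i j * N i j\<bar> \<le> \<bar>N i j\<bar>" by (simp add: abs_mult mult_left_le_one_le)
    thus "M i j * N i j \<le> \<bar>N i j\<bar>" by simp
  qed
qed

lemma dual_scale:
  assumes fin: "finite Rw" "finite Cl" and K: "0 \<le> K"
  shows "gamma2_dual Rw Cl (\<lambda>i j. if d i then K * N i j else 0) \<le> K * gamma2_dual Rw Cl N"
  unfolding gamma2_dual_def
proof (rule cSup_least)
  show "{\<Sum>i\<in>Rw. \<Sum>j\<in>Cl. M i j * (if d i then K * N i j else 0) |M. gamma2 Rw Cl M \<le> 1} \<noteq> {}"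
    using gamma2_zero[OF fin] by blast
next
  fix x assume "x \<in> {\<Sum>i\<in>Rw. \<Sum>j\<in>Cl. M i j * (if d i then K * N i j else 0) |M. gamma2 Rw Cl M \<le> 1}"
  then obtain M where x: "x = (\<Sum>i\<in>Rw. \<Sum>j\<in>Cl. M i j * (if d i then K * N i j else 0))"
    and g: "gamma2 Rw Cl M \<le> 1" by blast
  define M' where "M' = (\<lambda>i j. if d i then M i j else 0)"
  have g': "gamma2 Rw Cl M' \<le> 1" using gamma2_restrict[OF fin, of d M] g unfolding M'_def by linarith
  have "x = K * (\<Sum>i\<in>Rw. \<Sum>j\<in>Cl. M' i j * N i j)"
    unfolding x M'_def sum_distrib_left by (intro sum.cong refl) auto
  also have "\<dots> \<le> K * Sup {(\<Sum>i\<in>Rw. \<Sum>j\<in>Cl. M i j * N i j) | M. gamma2 Rw Cl M \<le> 1}"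
    by (rule mult_left_mono[OF cSup_upper[OF _ dual_bdd[OF fin]] K]) (use g' in blast)
  finally show "x \<le> K * Sup {(\<Sum>i\<in>Rw. \<Sum>j\<in>Cl. M i j * N i j) | M. gamma2 Rw Cl M \<le> 1}" .
qed



lemma finite_concepts: "finite X \<Longrightarrow> finite (concepts X)"
proof -
  assume f: "finite X"
  have "concepts X \<subseteq> (\<lambda>S x. x \<in> S) ` Pow X"
  proof
    fix c assume "c \<in> concepts X"
    hence "{x. c x} \<subseteq> X" unfolding concepts_def by auto
    moreover have "c = (\<lambda>x. x \<in> {x. c x})" by auto
    ultimately show "c \<in> (\<lambda>S x. x \<in> S) ` Pow X" by blast
  qed
  thus ?thesis using f finite_subset by blast
qed

lemma finite_ss: "finite X \<Longrightarrow> finite (sample_space X)"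
  unfolding sample_space_def by simp

lemma loss_bounds:
  assumes "is_distr (sample_space X) D"
  shows "0 \<le> loss X D c \<and> loss X D c \<le> 1"
proof -
  have nn: "\<And>z. 0 \<le> D z" and s: "sum D (sample_space X) = 1" using assms unfolding is_distr_def by auto
  have "0 \<le> loss X D c" unfolding loss_def by (rule sum_nonneg) (use nn in auto)
  moreover have "loss X D c \<le> sum D (sample_space X)" unfolding loss_def
    by (rule sum_mono) (use nn in auto)
  ultimately show ?thesis using s by simp
qed

lemma loss_lin: "loss X (\<lambda>z. a * D1 z + b * D2 z) c = a * loss X D1 c + b * loss X D2 c"
  unfolding loss_def sum_distrib_left sum.distrib[symmetric] by (intro sum.cong) auto

lemma distr_mix:
  assumes "is_distr S p" "is_distr S q" "0 \<le> t" "t \<le> 1"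
  shows "is_distr S (\<lambda>z. (1 - t) * p z + t * q z)"
  using assms unfolding is_distr_def by (simp add: sum.distrib sum_distrib_left[symmetric])

lemma dyadic:
  fixes L :: real
  assumes "0 \<le> L" "L \<le> 1"
  shows "L \<le> (1/2)^N + (\<Sum>j\<in>{1..N}. if (1/2)^j \<le> L then 2*(1/2)^j else 0)"
proof (induction N)
  case 0 thus ?case using assms by simp
next
  case (Suc N)
  have nn: "0 \<le> (\<Sum>j\<in>{1..N}. if (1/2::real)^j \<le> L then 2*(1/2::real)^j else 0)"
    by (rule sum_nonneg) auto
  show ?case
  proof (cases "(1/2::real)^(Suc N) \<le> L")
    case True
    have "(1/2::real)^N = (1/2)^Suc N + 2*(1/2)^(Suc N) - (1/2)^Suc N" by simp
    have p: "0 \<le> (1/2::real)^N" by simp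
    show ?thesis using Suc True apply (simp add: sum.cl_ivl_Suc) using p by linarith
  next
    case False
    thus ?thesis using nn by (simp add: sum.cl_ivl_Suc)
  qed
qed

lemma pigeon:
  fixes \<pi> L :: "'a \<Rightarrow> real"
  assumes fin: "finite C" and pn: "\<forall>c\<in>C. 0 \<le> \<pi> c" and ps: "sum \<pi> C = 1"
    and Lb: "\<forall>c\<in>C. 0 \<le> L c \<and> L c \<le> 1" and N: "1 \<le> N"
    and small: "(1/2)^N \<le> (\<Sum>c\<in>C. \<pi> c * L c) / 2"
  shows "\<exists>j\<in>{1..N}. (\<Sum>c\<in>C. \<pi> c * L c) / (4 * real N) \<le> (1/2)^j * (\<Sum>c\<in>C. if (1/2)^j \<le> L c then \<pi> c else 0)"
proof (rule ccontr)
  define D where "D = (\<Sum>c\<in>C. \<pi> c * L c)"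
  define Q where "Q j = (\<Sum>c\<in>C. if (1/2::real)^j \<le> L c then \<pi> c else 0)" for j :: nat
  assume "\<not> ?thesis"
  hence lt: "\<forall>j\<in>{1..N}. (1/2)^j * Q j < D / (4 * real N)" unfolding D_def Q_def by (auto simp: not_le)
  have "D \<le> (\<Sum>c\<in>C. \<pi> c * ((1/2)^N + (\<Sum>j\<in>{1..N}. if (1/2)^j \<le> L c then 2*(1/2)^j else 0)))"
    unfolding D_def by (rule sum_mono) (use pn Lb dyadic in \<open>auto intro: mult_left_mono\<close>)
  also have "\<dots> = (1/2)^N * sum \<pi> C + (\<Sum>c\<in>C. \<Sum>j\<in>{1..N}. \<pi> c * (if (1/2)^j \<le> L c then 2*(1/2)^j else 0))"
    by (simp add: algebra_simps sum.distrib sum_distrib_left sum_distrib_right)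
  also have "(\<Sum>c\<in>C. \<Sum>j\<in>{1..N}. \<pi> c * (if (1/2::real)^j \<le> L c then 2*(1/2)^j else 0))
      = (\<Sum>j\<in>{1..N}. 2 * ((1/2)^j * Q j))"
    unfolding Q_def sum.swap[of _ C] sum_distrib_left
    by (intro sum.cong refl) auto
  also have "(\<Sum>j\<in>{1..N}. 2 * ((1/2::real)^j * Q j)) < (\<Sum>j\<in>{1..N}. 2 * (D / (4 * real N)))"
  proof (rule sum_strict_mono)
    show "finite {1..N}" by simp
    show "{1..N} \<noteq> {}" using N by simp
    fix j assume "j \<in> {1..N}"
    hence "(1/2)^j * Q j < D / (4 * real N)" using lt by blast
    thus "2 * ((1/2::real)^j * Q j) < 2 * (D / (4 * real N))" by simp
  qed
  also have "(\<Sum>j\<in>{1..N}. 2 * (D / (4 * real N))) = D / 2" using N by simp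
  finally have "D < (1/2)^N + D/2" using ps by simp
  thus False using small unfolding D_def by simp
qed



lemma final_ineq: "0 < (n::real) \<Longrightarrow> 0 < l \<Longrightarrow> 0 < a \<Longrightarrow> n * g \<le> 2 * l \<Longrightarrow> (g / 4 * a / (1 + a)) / l \<le> a / (2 * n * (1 + a))"
proof -
  assume h: "0 < (n::real)" "0 < l" "0 < a" "n * g \<le> 2 * l"
  have "g / (4 * l) \<le> 1 / (2 * n)" using h by (simp add: divide_simps mult.commute)
  hence "a / (1 + a) * (g / (4 * l)) \<le> a / (1 + a) * (1 / (2 * n))"
    using h by (intro mult_left_mono) auto
  thus ?thesis by (simp add: field_simps)
qed

lemma N_bounds:
  fixes \<alpha> :: real
  assumes a0: "0 < \<alpha>" and a1: "\<alpha> < 1"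
  defines "l \<equiv> ln ((1 + \<alpha>) / \<alpha>)"
  defines "N \<equiv> nat \<lceil>l / ln 2\<rceil>"
  shows "1 \<le> N" "(1/2)^N \<le> \<alpha> / (1 + \<alpha>)" "real N \<le> 2 * l / ln 2" "0 < l"
proof -
  have "2 < (1 + \<alpha>) / \<alpha>" using a0 a1 by (simp add: field_simps)
  hence l2: "ln 2 < l" unfolding l_def by (subst ln_less_cancel_iff) auto
  have ln2: "0 < ln (2::real)" by simp
  hence q: "1 < l / ln 2" using l2 by simp
  have Nge: "l / ln 2 \<le> real N" unfolding N_def by linarith
  have Nle: "real N \<le> l / ln 2 + 1" unfolding N_def using q by linarith
  show "1 \<le> N" using Nge q by linarith
  have "2 * l / ln 2 = l / ln 2 + l / ln 2" by simp
  thus "real N \<le> 2 * l / ln 2" using Nle q by linarith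
  show "0 < l" using l2 ln2 by linarith
  have "l \<le> real N * ln 2" using Nge ln2 by (simp add: field_simps)
  hence "exp l \<le> exp (real N * ln 2)" by simp
  also have "exp (real N * ln 2) = 2 ^ N" by (simp add: exp_of_nat_mult)
  also have "exp l = (1 + \<alpha>) / \<alpha>" unfolding l_def using a0 by simp
  finally have "(1 + \<alpha>) / \<alpha> \<le> 2 ^ N" .
  hence "1 / (2::real) ^ N \<le> 1 / ((1 + \<alpha>) / \<alpha>)"
    using a0 by (intro divide_left_mono) auto
  thus "(1/2)^N \<le> \<alpha> / (1 + \<alpha>)" by (simp add: power_one_over)
qed

theorem lemma4p4:
  shows "\<exists>C0 > (0::real). \<forall>(X::nat set) (C::(nat \<Rightarrow> bool) set) (\<alpha>::real)
      (lam :: (nat \<Rightarrow> bool) \<Rightarrow> nat \<times> bool \<Rightarrow> real) (mu :: (nat \<Rightarrow> bool) \<Rightarrow> nat \<times> bool \<Rightarrow> real)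
      (\<pi> :: (nat \<Rightarrow> bool) \<Rightarrow> real).
    finite X \<longrightarrow> C \<subseteq> concepts X \<longrightarrow> 0 < \<alpha> \<longrightarrow> \<alpha> < 1 \<longrightarrow>
    (\<forall>c\<in>C. is_distr (sample_space X) (lam c) \<and> is_distr (sample_space X) (mu c)) \<longrightarrow>
    is_distr C \<pi> \<longrightarrow>
    (\<Sum>c\<in>C. \<pi> c * loss X (lam c) c) > 2 * \<alpha> / (1 + \<alpha>) \<longrightarrow>
    (\<forall>c\<in>C. loss X (mu c) c = 0) \<longrightarrow>
    (\<exists>lam' mu' \<pi>'.
       (\<forall>c\<in>C. is_distr (sample_space X) (lam' c) \<and> is_distr (sample_space X) (mu' c)) \<and>
       is_distr C \<pi>' \<and>
       (\<forall>c\<in>C. \<pi>' c > 0 \<longrightarrow> loss X (lam' c) c \<ge> (C0 * \<alpha> / (1 + \<alpha>)) / ln ((1 + \<alpha>) / \<alpha>)) \<and>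
       (\<forall>c\<in>C. loss X (mu' c) c = 0) \<and>
       gamma2_dual C (sample_space X) (\<lambda>c z. \<pi>' c * (lam' c z - mu' c z))
         \<le> 2 * \<alpha> * gamma2_dual C (sample_space X) (\<lambda>c z. \<pi> c * (lam c z - mu c z))
           / ((1 + \<alpha>) * (\<Sum>c\<in>C. \<pi> c * loss X (lam c) c)))"
proof (intro exI[of _ "ln 2 / 4"] conjI allI impI)
  show "0 < ln (2::real) / 4" by simp
next
  fix X :: "nat set" and C :: "(nat \<Rightarrow> bool) set" and \<alpha> :: real
    and lam mu :: "(nat \<Rightarrow> bool) \<Rightarrow> nat \<times> bool \<Rightarrow> real" and \<pi> :: "(nat \<Rightarrow> bool) \<Rightarrow> real"
  assume fX: "finite X" and CX: "C \<subseteq> concepts X" and a0: "0 < \<alpha>" and a1: "\<alpha> < 1"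
    and dist: "\<forall>c\<in>C. is_distr (sample_space X) (lam c) \<and> is_distr (sample_space X) (mu c)"
    and pid: "is_distr C \<pi>"
    and Dgt: "(\<Sum>c\<in>C. \<pi> c * loss X (lam c) c) > 2 * \<alpha> / (1 + \<alpha>)"
    and mu0: "\<forall>c\<in>C. loss X (mu c) c = 0"
  define D where "D = (\<Sum>c\<in>C. \<pi> c * loss X (lam c) c)"
  define L where "L c = loss X (lam c) c" for c
  have finC: "finite C" using finite_concepts[OF fX] CX finite_subset by blast
  have finS: "finite (sample_space X)" using fX by (rule finite_ss)
  have pn: "\<forall>c\<in>C. 0 \<le> \<pi> c" and ps: "sum \<pi> C = 1" and pout: "\<forall>c. c \<notin> C \<longrightarrow> \<pi> c = 0"
    using pid unfolding is_distr_def by auto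
  have Lb: "\<forall>c\<in>C. 0 \<le> L c \<and> L c \<le> 1" unfolding L_def using dist loss_bounds by blast
  define l where "l = ln ((1 + \<alpha>) / \<alpha>)"
  define N where "N = nat \<lceil>l / ln 2\<rceil>"
  have N1: "1 \<le> N" and Nsm: "(1/2)^N \<le> \<alpha> / (1 + \<alpha>)" and Nl: "real N \<le> 2 * l / ln 2" and lpos: "0 < l"
    using N_bounds[OF a0 a1] unfolding l_def N_def by auto
  have Dgt': "2 * \<alpha> / (1 + \<alpha>) < D" using Dgt unfolding D_def .
  have apos: "0 < 2 * \<alpha> / (1 + \<alpha>)" using a0 by simp
  hence Dpos: "0 < D" using Dgt' by linarith
  have small: "(1/2)^N \<le> (\<Sum>c\<in>C. \<pi> c * L c) / 2"
  proof -
    have "\<alpha> / (1 + \<alpha>) = (2 * \<alpha> / (1 + \<alpha>)) / 2" using a0 by (simp add: field_simps)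
    thus ?thesis using Nsm Dgt' unfolding D_def L_def by linarith
  qed
  obtain j where j: "j \<in> {1..N}"
    and jb: "(\<Sum>c\<in>C. \<pi> c * L c) / (4 * real N) \<le> (1/2)^j * (\<Sum>c\<in>C. if (1/2)^j \<le> L c then \<pi> c else 0)"
    using pigeon[OF finC pn ps Lb N1 small] by blast
  define \<tau> :: real where "\<tau> = (1/2)^j"
  define Q where "Q = (\<Sum>c\<in>C. if \<tau> \<le> L c then \<pi> c else 0)"
  have tpos: "0 < \<tau>" unfolding \<tau>_def by simp
  have jb': "D / (4 * real N) \<le> \<tau> * Q" using jb unfolding D_def L_def \<tau>_def Q_def .
  have "0 < D / (4 * real N)" using Dpos N1 by simp
  hence "0 < \<tau> * Q" using jb' by linarith
  hence Qpos: "0 < Q" using tpos by (simp add: zero_less_mult_iff)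
  have "Q \<le> sum \<pi> C" unfolding Q_def by (rule sum_mono) (use pn in auto)
  hence Qle: "Q \<le> 1" using ps by simp
  define K where "K = 2 * \<alpha> / ((1 + \<alpha>) * D)"
  have Kpos: "0 \<le> K" unfolding K_def using a0 Dpos by simp
  have Kle: "K \<le> 1"
  proof -
    have "2 * \<alpha> / (1 + \<alpha>) \<le> D" using Dgt' by simp
    hence "2 * \<alpha> \<le> D * (1 + \<alpha>)" using a0 by (simp add: field_simps)
    thus ?thesis unfolding K_def using a0 Dpos by (simp add: field_simps)
  qed
  define t where "t = K * Q"
  have t0: "0 \<le> t" unfolding t_def using Kpos Qpos by simp
  have t1: "t \<le> 1" unfolding t_def using Kpos Kle Qpos Qle by (simp add: mult_le_one)
  define lam' where "lam' c z = (1 - t) * mu c z + t * lam c z" for c z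
  define \<pi>' where "\<pi>' c = (if c \<in> C \<and> \<tau> \<le> L c then \<pi> c / Q else 0)" for c
  define d where "d c = (c \<in> C \<and> \<tau> \<le> L c)" for c
  show "\<exists>lam' mu' \<pi>'.
       (\<forall>c\<in>C. is_distr (sample_space X) (lam' c) \<and> is_distr (sample_space X) (mu' c)) \<and>
       is_distr C \<pi>' \<and>
       (\<forall>c\<in>C. \<pi>' c > 0 \<longrightarrow> loss X (lam' c) c \<ge> (ln 2 / 4 * \<alpha> / (1 + \<alpha>)) / ln ((1 + \<alpha>) / \<alpha>)) \<and>
       (\<forall>c\<in>C. loss X (mu' c) c = 0) \<and>
       gamma2_dual C (sample_space X) (\<lambda>c z. \<pi>' c * (lam' c z - mu' c z))
         \<le> 2 * \<alpha> * gamma2_dual C (sample_space X) (\<lambda>c z. \<pi> c * (lam c z - mu c z))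
           / ((1 + \<alpha>) * (\<Sum>c\<in>C. \<pi> c * loss X (lam c) c))"
  proof (rule exI[of _ lam'], rule exI[of _ mu], rule exI[of _ \<pi>'], intro conjI ballI impI)
    fix c assume "c \<in> C"
    thus "is_distr (sample_space X) (lam' c)" unfolding lam'_def
      using dist distr_mix t0 t1 by blast
  next
    fix c assume "c \<in> C"
    show "is_distr (sample_space X) (mu c)" using dist \<open>c \<in> C\<close> by blast
  next
    show "is_distr C \<pi>'"
      unfolding is_distr_def
    proof (intro conjI allI impI)
      fix z show "0 \<le> \<pi>' z" unfolding \<pi>'_def using pn Qpos by auto
    next
      fix z assume "z \<notin> C" thus "\<pi>' z = 0" unfolding \<pi>'_def by auto
    next
      have "sum \<pi>' C = (\<Sum>c\<in>C. (if \<tau> \<le> L c then \<pi> c else 0) / Q)"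
        unfolding \<pi>'_def by (intro sum.cong) auto
      also have "\<dots> = Q / Q" unfolding Q_def by (rule sum_divide_distrib[symmetric])
      finally show "sum \<pi>' C = 1" using Qpos by simp
    qed
  next
    fix c assume cC: "c \<in> C" and pp: "0 < \<pi>' c"
    hence tl: "\<tau> \<le> L c" unfolding \<pi>'_def by (auto split: if_splits)
    have "loss X (lam' c) c = (1 - t) * loss X (mu c) c + t * loss X (lam c) c"
      unfolding lam'_def by (rule loss_lin)
    also have "\<dots> = t * L c" using mu0 cC unfolding L_def by simp
    finally have le: "t * \<tau> \<le> loss X (lam' c) c" using tl t0 by (simp add: mult_left_mono)
    have "t * \<tau> = K * (\<tau> * Q)" unfolding t_def by simp
    also have "K * (\<tau> * Q) \<ge> K * (D / (4 * real N))" using jb' Kpos by (rule mult_left_mono)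
    also have "K * (D / (4 * real N)) = \<alpha> / (2 * real N * (1 + \<alpha>))"
    proof -
      have n0: "real N \<noteq> 0" using N1 by simp
      have a1': "1 + \<alpha> \<noteq> 0" using a0 by simp
      have d0: "D \<noteq> 0" using Dpos by simp
      have np: "0 < real N" using N1 by simp
      hence "0 < \<alpha> * (real N * 2)" using a0 by simp
      hence x0: "real N * 2 + \<alpha> * (real N * 2) \<noteq> 0" using np by linarith
      have aux: "0 < (n::real) \<Longrightarrow> 0 < a \<Longrightarrow> 0 < D \<Longrightarrow> 2 * a / ((1 + a) * D) * (D / (4 * n)) = a / (2 * n * (1 + a))" for n a D
        by (simp add: divide_simps)
      show ?thesis unfolding K_def using aux[OF np a0 Dpos] .
    qed
    finally have "\<alpha> / (2 * real N * (1 + \<alpha>)) \<le> loss X (lam' c) c" using le by linarith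
    moreover have "(ln 2 / 4 * \<alpha> / (1 + \<alpha>)) / l \<le> \<alpha> / (2 * real N * (1 + \<alpha>))"
    proof -
      have "real N * ln 2 \<le> 2 * l" using Nl by (simp add: field_simps)
      moreover have "0 < real N" using N1 by simp
      ultimately show ?thesis using final_ineq a0 lpos by blast
    qed
    ultimately show "(ln 2 / 4 * \<alpha> / (1 + \<alpha>)) / ln ((1 + \<alpha>) / \<alpha>) \<le> loss X (lam' c) c"
      unfolding l_def by linarith
  next
    fix c assume "c \<in> C"
    show "loss X (mu c) c = 0" using mu0 \<open>c \<in> C\<close> by blast
  next
    have eq: "(\<lambda>c z. \<pi>' c * (lam' c z - mu c z)) = (\<lambda>c z. if d c then K * (\<pi> c * (lam c z - mu c z)) else 0)"
    proof (intro ext)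
      fix c z
      show "\<pi>' c * (lam' c z - mu c z) = (if d c then K * (\<pi> c * (lam c z - mu c z)) else 0)"
      proof (cases "d c")
        case True
        have "lam' c z - mu c z = t * (lam c z - mu c z)" unfolding lam'_def by (simp add: algebra_simps)
        hence "\<pi>' c * (lam' c z - mu c z) = \<pi> c / Q * (K * Q * (lam c z - mu c z))"
          using True unfolding \<pi>'_def d_def t_def by simp
        also have "\<dots> = K * (\<pi> c * (lam c z - mu c z))" using Qpos by (simp add: field_simps)
        finally show ?thesis using True by simp
      next
        case False
        hence "\<pi>' c = 0" unfolding \<pi>'_def d_def by auto
        thus ?thesis using False by simp
      qed
    qed
    have "gamma2_dual C (sample_space X) (\<lambda>c z. \<pi>' c * (lam' c z - mu c z))
        \<le> K * gamma2_dual C (sample_space X) (\<lambda>c z. \<pi> c * (lam c z - mu c z))"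
      unfolding eq by (rule dual_scale[OF finC finS Kpos])
    thus "gamma2_dual C (sample_space X) (\<lambda>c z. \<pi>' c * (lam' c z - mu c z))
         \<le> 2 * \<alpha> * gamma2_dual C (sample_space X) (\<lambda>c z. \<pi> c * (lam c z - mu c z))
           / ((1 + \<alpha>) * (\<Sum>c\<in>C. \<pi> c * loss X (lam c) c))"
      unfolding K_def D_def by simp
  qed
qed

end
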